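(* Let $\pi = (X_1, \ldots, X_m)$ be a modular organisation. Then for all $1 \le i \le j \le m$, the sequence $(X_1, \ldots, X_{i-1}, \bigcup_{k=i}^{j} X_k, X_{j+1}, \ldots, X_m)$ is a modular organisation.
   Context: Let $A$ be a finite set of agents. For each $a \in A$ let $S_a$ be a nonempty finite set, and let $S = \prod_{a \in A} S_a$ be the set of states. For each $a \in A$ let $\to_a \subseteq S \times S$ be a relation that is either empty or left-total, such that whenever $s \to_a s'$, either $s = s'$ or $s$ and $s'$ differ only in the $a$-component. For $X \subseteq A$ let $\to_X = \bigcup_{a \in X} \to_a$ (so $\to_\emptyset$ is empty) and $\to_X^*$ its reflexive-transitive closure; for $T \subseteq S$, $(T \to_X) = \{ t' : \exists t \in T,\ t \to_X t'\}$. Orbit operator: $\Omega_X(S') = \{ s' : \exists s \in S',\ s \to_X^* s'\}$. Equilibria operator: $\Psi_X(S') = \{ s \in \Omega_X(S') : \forall s' \in S,\ s \to_X^* s' \implies s' \to_X^* s \}$. $M$-relation: for $X, Y \subseteq A$, $X \leadsto Y$ iff for every $S' \subseteq S$, with $T = \Psi_X(\Psi_{X \cup Y}(S'))$, one has $(T \to_Y) \subseteq T$. A modular organisation is an ordered partition $(X_1, \ldots, X_m)$ of $A$ (a sequence of nonempty pairwise disjoint subsets whose union is $A$) such that for all $1 \le i \le m$, $\left(\bigcup_{j=1}^{i-1} X_j\right) \leadsto X_i$ (the empty union being $\emptyset$). *)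

theory Defs
  imports "HOL-Library.FuncSet"
begin

text \<open>Agents of type 'a; a state is a function from agents to local states ('b),
  restricted to the agent set A (extensional).  R a is the transition relation
  of agent a.\<close>

definition states :: "'a set \<Rightarrow> ('a \<Rightarrow> 'b set) \<Rightarrow> ('a \<Rightarrow> 'b) set" where
  "states A Sa = PiE A Sa"

definition async_system ::
  "'a set \<Rightarrow> ('a \<Rightarrow> 'b set) \<Rightarrow> ('a \<Rightarrow> (('a \<Rightarrow> 'b) \<times> ('a \<Rightarrow> 'b)) set) \<Rightarrow> bool" where
  "async_system A Sa R \<longleftrightarrow>
     finite A \<and>
     (\<forall>a\<in>A. Sa a \<noteq> {} \<and> finite (Sa a)) \<and>
     (\<forall>a\<in>A. R a \<subseteq> states A Sa \<times> states A Sa) \<and>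
     (\<forall>a\<in>A. R a = {} \<or> (\<forall>s\<in>states A Sa. \<exists>s'. (s, s') \<in> R a)) \<and>
     (\<forall>a\<in>A. \<forall>s s'. (s, s') \<in> R a \<longrightarrow> s = s' \<or> (\<forall>b\<in>A. b \<noteq> a \<longrightarrow> s b = s' b))"

definition stepX :: "('a \<Rightarrow> ('s \<times> 's) set) \<Rightarrow> 'a set \<Rightarrow> ('s \<times> 's) set" where
  "stepX R X = (\<Union>a\<in>X. R a)"

definition Orbit :: "('a \<Rightarrow> ('s \<times> 's) set) \<Rightarrow> 'a set \<Rightarrow> 's set \<Rightarrow> 's set" where
  "Orbit R X S' = {s'. \<exists>s\<in>S'. (s, s') \<in> (stepX R X)\<^sup>*}"

definition Equil :: "'s set \<Rightarrow> ('a \<Rightarrow> ('s \<times> 's) set) \<Rightarrow> 'a set \<Rightarrow> 's set \<Rightarrow> 's set" where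
  "Equil S R X S' = {s \<in> Orbit R X S'. \<forall>s'\<in>S. (s, s') \<in> (stepX R X)\<^sup>* \<longrightarrow> (s', s) \<in> (stepX R X)\<^sup>*}"

definition Mrel :: "'s set \<Rightarrow> ('a \<Rightarrow> ('s \<times> 's) set) \<Rightarrow> 'a set \<Rightarrow> 'a set \<Rightarrow> bool" where
  "Mrel S R X Y \<longleftrightarrow>
     (\<forall>S'. S' \<subseteq> S \<longrightarrow>
        (let T = Equil S R X (Equil S R (X \<union> Y) S') in stepX R Y `` T \<subseteq> T))"

text \<open>Ordered partition (X_1,...,X_m) as a list, 0-indexed.\<close>
definition modular_org ::
  "'a set \<Rightarrow> ('s set) \<Rightarrow> ('a \<Rightarrow> ('s \<times> 's) set) \<Rightarrow> 'a set list \<Rightarrow> bool" where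
  "modular_org A S R Xs \<longleftrightarrow>
     (\<forall>i<length Xs. Xs ! i \<noteq> {}) \<and>
     (\<forall>i<length Xs. \<forall>j<length Xs. i \<noteq> j \<longrightarrow> Xs ! i \<inter> Xs ! j = {}) \<and>
     (\<Union>i<length Xs. Xs ! i) = A \<and>
     (\<forall>i<length Xs. Mrel S R (\<Union>j<i. Xs ! j) (Xs ! i))"

end

theory Submission
  imports Defs
begin

definition att :: "'s set \<Rightarrow> ('a \<Rightarrow> ('s \<times> 's) set) \<Rightarrow> 'a set \<Rightarrow> 's \<Rightarrow> bool" where
  "att S R V p \<longleftrightarrow> (\<forall>v\<in>S. (p,v) \<in> (stepX R V)\<^sup>* \<longrightarrow> (v,p) \<in> (stepX R V)\<^sup>*)"

lemma Equil_iff: "x \<in> Equil S R V S' \<longleftrightarrow> x \<in> Orbit R V S' \<and> att S R V x"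
  unfolding Equil_def att_def by auto

lemma stepX_Un: "stepX R (V \<union> U) = stepX R V \<union> stepX R U"
  unfolding stepX_def by blast

lemma stepX_mono: "V \<subseteq> W \<Longrightarrow> stepX R V \<subseteq> stepX R W"
  unfolding stepX_def by blast

lemma rt_mono: "V \<subseteq> W \<Longrightarrow> (stepX R V)\<^sup>* \<subseteq> (stepX R W)\<^sup>*"
  by (intro rtrancl_mono stepX_mono)

lemma F1:
  assumes "x \<in> Equil S R V S'" "(x,y) \<in> (stepX R V)\<^sup>*"
  shows "y \<in> Equil S R V S'"
  using assms unfolding Equil_def Orbit_def
  by (auto intro: rtrancl_trans)

lemma reach_in:
  assumes "(p,q) \<in> r\<^sup>*" "p \<in> S" "r \<subseteq> S \<times> S" shows "q \<in> S"
  using assms(1) by induction (use assms in auto)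

lemma exists_att:
  assumes fin: "finite S" and sub: "r \<subseteq> S \<times> S" and p: "p \<in> S"
  shows "\<exists>q. (p,q) \<in> r\<^sup>* \<and> q \<in> S \<and> (\<forall>v\<in>S. (q,v) \<in> r\<^sup>* \<longrightarrow> (v,q) \<in> r\<^sup>*)"
proof -
  define f where "f q = card {v. (q,v) \<in> r\<^sup>*}" for q
  obtain q where q: "(p,q) \<in> r\<^sup>*" and qmin: "\<And>y. (p,y) \<in> r\<^sup>* \<Longrightarrow> f q \<le> f y"
    using ex_has_least_nat[of "\<lambda>q. (p,q) \<in> r\<^sup>*" p f] by auto
  have qS: "q \<in> S" using reach_in[OF q p sub] .
  have finR: "finite {v. (x,v) \<in> r\<^sup>*}" if "x \<in> S" for x
    by (rule finite_subset[OF _ fin]) (use reach_in[OF _ that sub] in auto)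
  have "(v,q) \<in> r\<^sup>*" if "v \<in> S" "(q,v) \<in> r\<^sup>*" for v
  proof -
    have sub2: "{u. (v,u) \<in> r\<^sup>*} \<subseteq> {u. (q,u) \<in> r\<^sup>*}" using that by (auto intro: rtrancl_trans)
    have "f q \<le> f v" using qmin q that by (auto intro: rtrancl_trans)
    hence "{u. (v,u) \<in> r\<^sup>*} = {u. (q,u) \<in> r\<^sup>*}"
      using card_seteq[OF finR[OF qS] sub2] unfolding f_def by auto
    thus ?thesis by auto
  qed
  thus ?thesis using q qS by auto
qed

lemma L:
  assumes fin: "finite S" and sub: "stepX R (V \<union> U) \<subseteq> S \<times> S"
    and M: "Mrel S R V U" and pS: "p \<in> S" and pa: "att S R (V \<union> U) p"
  shows "att S R V p"
proof -
  have subV: "stepX R V \<subseteq> S \<times> S" using sub stepX_mono[of V "V \<union> U" R] by blast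
  obtain q where q: "(p,q) \<in> (stepX R V)\<^sup>*" "q \<in> S" "att S R V q"
    using exists_att[OF fin subV pS] unfolding att_def by blast
  define E where "E = Equil S R (V \<union> U) {p}"
  define Q where "Q = Equil S R V E"
  have QU: "stepX R U `` Q \<subseteq> Q" using M pS unfolding Mrel_def Q_def E_def Let_def by auto
  have pE: "p \<in> E" unfolding E_def Equil_iff Orbit_def using pa by auto
  have qQ: "q \<in> Q" unfolding Q_def Equil_iff Orbit_def using q pE by auto
  have cl: "y \<in> Q" if "x \<in> Q" "(x,y) \<in> stepX R (V \<union> U)" for x y
  proof -
    from that(2) have "(x,y) \<in> stepX R V \<or> (x,y) \<in> stepX R U" by (simp add: stepX_Un)
    thus ?thesis
    proof
      assume "(x,y) \<in> stepX R V"
      thus ?thesis using F1[of x S R V E y] that(1) unfolding Q_def by auto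
    next
      assume "(x,y) \<in> stepX R U" thus ?thesis using QU that(1) by auto
    qed
  qed
  have "(q,p) \<in> (stepX R (V \<union> U))\<^sup>*"
    using pa q rt_mono[of V "V \<union> U" R] unfolding att_def by blast
  hence "p \<in> Q"
    by (induction rule: rtrancl_induct) (use qQ cl in auto)
  thus ?thesis unfolding Q_def Equil_iff by auto
qed

lemma merge2:
  assumes fin: "finite S" and sub: "stepX R (X \<union> Y \<union> Z) \<subseteq> S \<times> S"
    and M1: "Mrel S R X Y" and M2: "Mrel S R (X \<union> Y) Z"
  shows "Mrel S R X (Y \<union> Z)"
  unfolding Mrel_def Let_def
proof (intro allI impI subsetI)
  fix S' u assume S': "S' \<subseteq> S" and u: "u \<in> stepX R (Y \<union> Z) `` Equil S R X (Equil S R (X \<union> (Y \<union> Z)) S')"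
  define P where "P = Equil S R (X \<union> (Y \<union> Z)) S'"
  obtain t where t: "t \<in> Equil S R X P" and tu: "(t,u) \<in> stepX R (Y \<union> Z)" using u unfolding P_def by auto
  obtain s where s: "s \<in> P" "(s,t) \<in> (stepX R X)\<^sup>*" using t unfolding Equil_def Orbit_def by auto
  have tP: "t \<in> P" using F1[OF s(1)[unfolded P_def]] s(2) rt_mono[of X "X \<union> (Y \<union> Z)" R] unfolding P_def by blast
  have uP: "u \<in> P" using F1[OF tP[unfolded P_def], of u] tu stepX_mono[of "Y \<union> Z" "X \<union> (Y \<union> Z)" R] unfolding P_def by blast
  have uS: "u \<in> S" using tu sub stepX_mono[of "Y \<union> Z" "X \<union> Y \<union> Z" R] by blast
  have a1: "att S R (X \<union> Y \<union> Z) u" using uP unfolding P_def Equil_iff by (simp add: Un_assoc)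
  have a2: "att S R (X \<union> Y) u" by (rule L[OF fin sub M2 uS a1])
  have sub2: "stepX R (X \<union> Y) \<subseteq> S \<times> S" using sub stepX_mono[of "X \<union> Y" "X \<union> Y \<union> Z" R] by blast
  have a3: "att S R X u" by (rule L[OF fin sub2 M1 uS a2])
  show "u \<in> Equil S R X P" unfolding Equil_iff Orbit_def using uP a3 by auto
qed


lemma block_Mrel:
  assumes fin: "finite S" and sub: "\<And>V. V \<subseteq> (\<Union>l<length Xs. Xs ! l) \<Longrightarrow> stepX R V \<subseteq> S \<times> S"
    and M: "\<forall>l<length Xs. Mrel S R (\<Union>k<l. Xs ! k) (Xs ! l)"
    and ij: "i \<le> n" "n < length Xs"
  shows "Mrel S R (\<Union>k<i. Xs ! k) (\<Union>k\<in>{i..n}. Xs ! k)"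
  using ij
proof (induction n)
  case 0 thus ?case using M by auto
next
  case (Suc n)
  show ?case
  proof (cases "i = Suc n")
    case True thus ?thesis using M Suc.prems by auto
  next
    case False
    hence IH: "Mrel S R (\<Union>k<i. Xs ! k) (\<Union>k\<in>{i..n}. Xs ! k)" using Suc by auto
    have e1: "(\<Union>k<i. Xs ! k) \<union> (\<Union>k\<in>{i..n}. Xs ! k) = (\<Union>k<Suc n. Xs ! k)"
    proof -
      have "{..<Suc n} = {..<i} \<union> {i..n}" using Suc.prems False by auto
      thus ?thesis by (simp only: UN_Un)
    qed
    have e2: "(\<Union>k\<in>{i..n}. Xs ! k) \<union> Xs ! Suc n = (\<Union>k\<in>{i..Suc n}. Xs ! k)"
    proof -
      have "{i..Suc n} = {i..n} \<union> {Suc n}" using Suc.prems False by auto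
      thus ?thesis by (simp only: UN_Un) simp
    qed
    have M2: "Mrel S R ((\<Union>k<i. Xs ! k) \<union> (\<Union>k\<in>{i..n}. Xs ! k)) (Xs ! Suc n)"
      using M Suc.prems e1 by auto
    have "stepX R ((\<Union>k<i. Xs ! k) \<union> (\<Union>k\<in>{i..n}. Xs ! k) \<union> Xs ! Suc n) \<subseteq> S \<times> S"
      apply (rule sub) using Suc.prems apply auto
       subgoal for x xa by (intro bexI[of _ xa]) auto
      subgoal for x xa by (intro bexI[of _ xa]) auto
      done
    from merge2[OF fin this IH M2] show ?thesis by (simp add: e2)
  qed
qed

theorem proposition3:
  fixes A :: "'a set" and Sa :: "'a \<Rightarrow> 'b set"
    and R :: "'a \<Rightarrow> (('a \<Rightarrow> 'b) \<times> ('a \<Rightarrow> 'b)) set"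
    and Xs :: "'a set list" and i j :: nat
  assumes "async_system A Sa R"
    and "modular_org A (states A Sa) R Xs"
    and "i \<le> j" and "j < length Xs"
  shows "modular_org A (states A Sa) R
           (take i Xs @ [\<Union>k\<in>{i..j}. Xs ! k] @ drop (Suc j) Xs)"
proof -
  define S where "S = states A Sa"
  define Ys where "Ys = take i Xs @ [\<Union>k\<in>{i..j}. Xs ! k] @ drop (Suc j) Xs"
  define h where "h l = (if l < i then l else if l \<le> j then i else l - (j - i))" for l
  have fin: "finite S" using assms(1) unfolding S_def states_def async_system_def
    by (auto intro: finite_PiE)
  have sub: "stepX R V \<subseteq> S \<times> S" if "V \<subseteq> A" for V
    using assms(1) that unfolding async_system_def stepX_def S_def by blast
  have mo: "(\<forall>i<length Xs. Xs ! i \<noteq> {})" "(\<forall>i<length Xs. \<forall>j<length Xs. i \<noteq> j \<longrightarrow> Xs ! i \<inter> Xs ! j = {})"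
     "(\<Union>i<length Xs. Xs ! i) = A" "(\<forall>i<length Xs. Mrel S R (\<Union>j<i. Xs ! j) (Xs ! i))"
    using assms(2) unfolding modular_org_def S_def by auto
  have lenY: "length Ys = length Xs - (j - i)" unfolding Ys_def using assms(3,4) by auto
  have nth: "Ys ! k = (\<Union>l\<in>{l. l < length Xs \<and> h l = k}. Xs ! l)" if k: "k < length Ys" for k
  proof -
    consider "k < i" | "k = i" | "k > i" by linarith
    thus ?thesis
    proof cases
      case 1
      have "{l. l < length Xs \<and> h l = k} = {k}" using 1 assms(3,4) unfolding h_def by auto
      moreover have "Ys ! k = Xs ! k" using 1 assms(3,4) unfolding Ys_def by (simp add: nth_append)
      ultimately show ?thesis by simp
    next
      case 2
      have "{l. l < length Xs \<and> h l = k} = {i..j}" using 2 assms(3,4) unfolding h_def by auto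
      moreover have "Ys ! k = (\<Union>k\<in>{i..j}. Xs ! k)" using 2 assms(3,4) unfolding Ys_def by (simp add: nth_append)
      ultimately show ?thesis by simp
    next
      case 3
      have "{l. l < length Xs \<and> h l = k} = {k + (j - i)}" using 3 k lenY assms(3,4) unfolding h_def by auto
      moreover have "Ys ! k = Xs ! (k + (j - i))"
      proof -
        have ar: "Suc j + (k - Suc i) = k + (j - i)" using 3 assms(3) by arith
        have y1: "Ys ! k = drop (Suc j) Xs ! (k - Suc i)" using 3 k lenY assms(3,4) unfolding Ys_def
          by (simp add: nth_append)
        have "drop (Suc j) Xs ! (k - Suc i) = Xs ! (Suc j + (k - Suc i))"
          by (rule nth_drop) (use assms(4) in auto)
        thus ?thesis using y1 ar by simp
      qed
      ultimately show ?thesis by simp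
    qed
  qed
  have hlt: "h l < length Ys" if "l < length Xs" for l using that lenY assms(3,4) unfolding h_def by auto
  have pre: "(\<Union>k'<k. Ys ! k') = (\<Union>l\<in>{l. l < length Xs \<and> h l < k}. Xs ! l)" if "k < length Ys" for k
  proof -
    have "(\<Union>k'<k. Ys ! k') = (\<Union>k'<k. \<Union>l\<in>{l. l < length Xs \<and> h l = k'}. Xs ! l)"
      using nth that by auto
    also have "\<dots> = (\<Union>l\<in>{l. l < length Xs \<and> h l < k}. Xs ! l)" by blast
    finally show ?thesis .
  qed
  have "modular_org A S R Ys"
    unfolding modular_org_def
  proof (intro conjI allI impI)
    fix k assume k: "k < length Ys"
    define l where "l = (if k \<le> i then k else k + (j - i))"
    have "l < length Xs" "h l = k" using k lenY assms(3,4) unfolding l_def h_def by auto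
    thus "Ys ! k \<noteq> {}" using nth[OF k] mo(1) by auto
  next
    fix k k' assume "k < length Ys" "k' < length Ys" "k \<noteq> k'"
    thus "Ys ! k \<inter> Ys ! k' = {}" using nth mo(2) by fastforce
  next
    have "(\<Union>k<length Ys. Ys ! k) = (\<Union>k<length Ys. \<Union>l\<in>{l. l < length Xs \<and> h l = k}. Xs ! l)"
      using nth by auto
    also have "\<dots> = (\<Union>l<length Xs. Xs ! l)" using hlt by blast
    finally show "(\<Union>k<length Ys. Ys ! k) = A" using mo(3) by simp
  next
    fix k assume k: "k < length Ys"
    consider "k < i" | "k = i" | "k > i" by linarith
    thus "Mrel S R (\<Union>k'<k. Ys ! k') (Ys ! k)"
    proof cases
      case 1
      have "{l. l < length Xs \<and> h l < k} = {..<k}" using 1 assms(3,4) unfolding h_def by auto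
      moreover have "{l. l < length Xs \<and> h l = k} = {k}" using 1 assms(3,4) unfolding h_def by auto
      ultimately have "(\<Union>k'<k. Ys ! k') = (\<Union>l<k. Xs ! l)" "Ys ! k = Xs ! k"
        using pre[OF k] nth[OF k] by simp_all
      moreover have "k < length Xs" using 1 assms(3,4) by simp
      ultimately show ?thesis using mo(4) by simp
    next
      case 2
      have "{l. l < length Xs \<and> h l < k} = {..<i}" using 2 assms(3,4) unfolding h_def by auto
      moreover have "{l. l < length Xs \<and> h l = k} = {i..j}" using 2 assms(3,4) unfolding h_def by auto
      moreover have "Mrel S R (\<Union>k<i. Xs ! k) (\<Union>k\<in>{i..j}. Xs ! k)"
        by (rule block_Mrel[OF fin _ mo(4) assms(3,4)]) (use sub mo(3) in auto)
      ultimately show ?thesis using pre[OF k] nth[OF k] by simp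
    next
      case 3
      have "{l. l < length Xs \<and> h l < k} = {..<k + (j - i)}" using 3 k lenY assms(3,4) unfolding h_def by auto
      moreover have "{l. l < length Xs \<and> h l = k} = {k + (j - i)}" using 3 k lenY assms(3,4) unfolding h_def by auto
      ultimately have "(\<Union>k'<k. Ys ! k') = (\<Union>l<k + (j - i). Xs ! l)" "Ys ! k = Xs ! (k + (j - i))"
        using pre[OF k] nth[OF k] by simp_all
      moreover have "k + (j - i) < length Xs" using k lenY assms(3,4) by simp
      ultimately show ?thesis using mo(4) by simp
    qed
  qed
  thus ?thesis unfolding S_def Ys_def .
qed

end
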